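(* Let $p\ge1$, $f\in\mathcal A_0$, and let $\gamma_f$ be a solution of Problem $S_p$ for $f$. Then $\overline\delta J_p(f,\gamma_f)=1$.
   Context: For a convex $u$, $u^*(y)=\sup_x\{\langle x,y\rangle-u(x)\}$. $\mathcal L$: proper convex $u:\mathbb R^n\to\mathbb R\cup\{+\infty\}$ with $u(x)\to+\infty$ as $|x|\to\infty$; $\mathcal L_0=\{u\in\mathcal L:u\ge0,\ u^{**}=u,\ u(0)=0\}$; $\mathcal A_0=\{e^{-u}:u\in\mathcal L_0\}$ (integrable, support with nonempty interior). For $f=e^{-u}$: $h_f=u^*$; $J(f)=\int f\,dx$; $J(f^\diamond)=\int(nf+f\log f)\,dx$; $\mu_p(f,\cdot)$ defined by $\int g\,d\mu_p(f,\cdot)=\int_{\mathrm{dom}(u)}g(\nabla u(x))h_f(\nabla u(x))^{1-p}f(x)\,dx$; $\delta J_p(f,g)=\frac1p\int h_g^p\,d\mu_p(f,\cdot)$ and $\overline\delta J_p(f,g)=(p\,\delta J_p(f,g)/J(f^\diamond))^{1/p}$. Gaussians: $\gamma_\phi(x)=e^{-\|\phi x\|^2/2}$, $\phi\in GL(n)$; $c_n=(2\pi)^{n/2}$. Problem $S_p$: find a Gaussian $\gamma_\phi$ maximizing $J(\gamma_\phi)/c_n$ subject to $\overline\delta J_p(f,\gamma_\phi)\le1$. *)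

theory Defs
  imports "HOL-Analysis.Analysis"
begin

definition ext_convex :: "('a::real_vector \<Rightarrow> ereal) \<Rightarrow> bool" where
  "ext_convex u \<longleftrightarrow> (\<forall>x y (t::real). 0 < t \<and> t < 1 \<longrightarrow>
      u ((1 - t) *\<^sub>R x + t *\<^sub>R y) \<le> ereal (1 - t) * u x + ereal t * u y)"

definition ext_proper :: "('a \<Rightarrow> ereal) \<Rightarrow> bool" where
  "ext_proper u \<longleftrightarrow> (\<forall>x. u x \<noteq> -\<infinity>) \<and> (\<exists>x. u x \<noteq> \<infinity>)"

definition legendre :: "('a::real_inner \<Rightarrow> ereal) \<Rightarrow> 'a \<Rightarrow> ereal" where
  "legendre u y = (SUP x. ereal (x \<bullet> y) - u x)"

definition class_L :: "('a::real_normed_vector \<Rightarrow> ereal) \<Rightarrow> bool" where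
  "class_L u \<longleftrightarrow> ext_proper u \<and> ext_convex u \<and> (u \<longlongrightarrow> \<infinity>) at_infinity"

definition class_L0 :: "('a::real_inner \<Rightarrow> ereal) \<Rightarrow> bool" where
  "class_L0 u \<longleftrightarrow> class_L u \<and> (\<forall>x. u x \<ge> 0) \<and> legendre (legendre u) = u \<and> u 0 = 0"

definition expneg :: "('a \<Rightarrow> ereal) \<Rightarrow> 'a \<Rightarrow> real" where
  "expneg u x = (if u x = \<infinity> then 0 else exp (- real_of_ereal (u x)))"

definition class_A0 :: "(real^'n::finite \<Rightarrow> real) set" where
  "class_A0 = {expneg u | u. class_L0 u \<and> integrable lborel (expneg u)
       \<and> interior (closure {x. expneg u x > 0}) \<noteq> {}}"

definition uof :: "('a \<Rightarrow> real) \<Rightarrow> 'a \<Rightarrow> ereal" where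
  "uof f x = (if f x > 0 then ereal (- ln (f x)) else \<infinity>)"

definition hfun :: "('a::real_inner \<Rightarrow> real) \<Rightarrow> 'a \<Rightarrow> ereal" where
  "hfun f = legendre (uof f)"

text \<open>Gradient of u = -log f (meaningful a.e. on dom u).\<close>
definition gradu :: "('a::real_inner \<Rightarrow> real) \<Rightarrow> 'a \<Rightarrow> 'a" where
  "gradu f x = (SOME v. ((\<lambda>y. - ln (f y)) has_derivative (\<lambda>h. v \<bullet> h)) (at x))"

definition epow :: "ereal \<Rightarrow> real \<Rightarrow> ennreal" where
  "epow h q = (if q = 0 then 1
     else if h = \<infinity> then (if q > 0 then \<infinity> else 0)
     else if h > 0 then ennreal (real_of_ereal h powr q)
     else (if q > 0 then 0 else \<infinity>))"

text \<open>delta J_p(f,g) = (1/p) \<integral> h_g^p d mu_p(f,.), where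
  \<integral> G d mu_p(f,.) = \<integral>_{dom u} G(\<nabla>u(x)) h_f(\<nabla>u(x))^{1-p} f(x) dx.\<close>
definition deltaJ :: "real \<Rightarrow> (real^'n::finite \<Rightarrow> real) \<Rightarrow> (real^'n \<Rightarrow> real) \<Rightarrow> ennreal" where
  "deltaJ p f g = ennreal (1 / p) *
     (\<integral>\<^sup>+ x \<in> {x. uof f x \<noteq> \<infinity>}.
        epow (hfun g (gradu f x)) p * epow (hfun f (gradu f x)) (1 - p) * ennreal (f x) \<partial>lebesgue)"

definition Jint :: "(real^'n::finite \<Rightarrow> real) \<Rightarrow> real" where
  "Jint f = (\<integral> x. f x \<partial>lborel)"

text \<open>J(f^\<diamond>) = \<integral> (n f + f log f) dx.\<close>
definition Jdiam :: "(real^'n::finite \<Rightarrow> real) \<Rightarrow> real" where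
  "Jdiam f = (\<integral> x. real CARD('n) * f x + f x * ln (f x) \<partial>lborel)"

definition deltaJbar :: "real \<Rightarrow> (real^'n::finite \<Rightarrow> real) \<Rightarrow> (real^'n \<Rightarrow> real) \<Rightarrow> ereal" where
  "deltaJbar p f g = (if deltaJ p f g = \<infinity> then \<infinity>
     else ereal ((p * enn2real (deltaJ p f g) / Jdiam f) powr (1 / p)))"

definition gauss :: "real^'n^'n \<Rightarrow> real^'n \<Rightarrow> real" where
  "gauss \<phi> x = exp (- (norm (\<phi> *v x))\<^sup>2 / 2)"

definition c_const :: "nat \<Rightarrow> real" where
  "c_const n = (2 * pi) powr (real n / 2)"

definition solves_Sp :: "real \<Rightarrow> (real^'n \<Rightarrow> real) \<Rightarrow> (real^'n \<Rightarrow> real) \<Rightarrow> bool" where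
  "solves_Sp p f \<gamma> \<longleftrightarrow>
     (\<exists>\<phi>::real^'n^'n. invertible \<phi> \<and> \<gamma> = gauss \<phi>) \<and>
     deltaJbar p f \<gamma> \<le> 1 \<and>
     (\<forall>\<psi>::real^'n^'n. invertible \<psi> \<and> deltaJbar p f (gauss \<psi>) \<le> 1 \<longrightarrow>
        Jint (gauss \<psi>) / c_const CARD('n) \<le> Jint \<gamma> / c_const CARD('n))"

end

theory Submission
  imports Defs "HOL-Probability.Probability"
begin

lemma nn_cmult_le:
  fixes c :: ennreal
  shows "c * integral\<^sup>N M f \<le> (\<integral>\<^sup>+ x. c * f x \<partial>M)"
proof -
  have "c * integral\<^sup>N M f = (SUP g\<in>{g. simple_function M g \<and> g \<le> f}. c * integral\<^sup>S M g)"
    unfolding nn_integral_def by (rule SUP_mult_left_ennreal)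
  also have "\<dots> \<le> (\<integral>\<^sup>+ x. c * f x \<partial>M)"
  proof (rule SUP_least)
    fix g assume g: "g \<in> {g. simple_function M g \<and> g \<le> f}"
    then have "c * integral\<^sup>S M g = integral\<^sup>S M (\<lambda>x. c * g x)"
      by (simp add: simple_integral_mult)
    also have "\<dots> \<le> (\<integral>\<^sup>+ x. c * f x \<partial>M)"
      unfolding nn_integral_def
      apply (rule SUP_upper)
      using g by (auto simp: le_fun_def intro!: mult_left_mono)
    finally show "c * integral\<^sup>S M g \<le> (\<integral>\<^sup>+ x. c * f x \<partial>M)" .
  qed
  finally show ?thesis .
qed

lemma nn_cmult_eq:
  fixes r :: real
  assumes "r > 0"
  shows "(\<integral>\<^sup>+ x. ennreal r * f x \<partial>M) = ennreal r * integral\<^sup>N M f"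
proof (rule antisym)
  have "ennreal (1/r) * (\<integral>\<^sup>+ x. ennreal r * f x \<partial>M) \<le> (\<integral>\<^sup>+ x. ennreal (1/r) * (ennreal r * f x) \<partial>M)"
    by (rule nn_cmult_le)
  also have "\<dots> = integral\<^sup>N M f"
    using assms by (simp add: mult.assoc[symmetric] ennreal_mult[symmetric])
  finally have *: "ennreal (1/r) * (\<integral>\<^sup>+ x. ennreal r * f x \<partial>M) \<le> integral\<^sup>N M f" .
  have "(\<integral>\<^sup>+ x. ennreal r * f x \<partial>M) = ennreal r * (ennreal (1/r) * (\<integral>\<^sup>+ x. ennreal r * f x \<partial>M))"
    using assms by (simp add: mult.assoc[symmetric] ennreal_mult[symmetric])
  also have "\<dots> \<le> ennreal r * integral\<^sup>N M f" using * by (rule mult_left_mono) simp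
  finally show "(\<integral>\<^sup>+ x. ennreal r * f x \<partial>M) \<le> ennreal r * integral\<^sup>N M f" .
  show "ennreal r * integral\<^sup>N M f \<le> (\<integral>\<^sup>+ x. ennreal r * f x \<partial>M)" by (rule nn_cmult_le)
qed

lemma uof_gauss: "uof (gauss \<phi>) x = ereal ((norm (\<phi> *v x))\<^sup>2 / 2)"
  by (simp add: uof_def gauss_def)

lemma gauss_scale: "gauss (t *\<^sub>R \<phi>) x = gauss \<phi> (t *\<^sub>R x)"
  by (simp add: gauss_def scaleR_matrix_vector_assoc[symmetric] matrix_vector_mult_scaleR)

lemma sup_scale:
  fixes g :: "'a::real_vector \<Rightarrow> real"
  assumes c: "c > 0" and s: "s \<noteq> 0"
  shows "(SUP x. ereal (c * g (s *\<^sub>R x))) = ereal c * (SUP x. ereal (g x))"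
proof -
  have surj: "range (\<lambda>x::'a. s *\<^sub>R x) = UNIV"
  proof -
    have "y \<in> range (\<lambda>x. s *\<^sub>R x)" for y :: 'a
      using s by (intro image_eqI[of _ _ "(1/s) *\<^sub>R y"]) auto
    then show ?thesis by auto
  qed
  have "(SUP x. ereal (g (s *\<^sub>R x))) = (SUP x. ereal (g x))"
  proof -
    have "(SUP x. ereal (g (s *\<^sub>R x))) = Sup ((\<lambda>x. ereal (g x)) ` range (\<lambda>x. s *\<^sub>R x))"
      by (simp add: image_image)
    then show ?thesis using surj by simp
  qed
  moreover have "(SUP x. ereal (c * g (s *\<^sub>R x))) = ereal c * (SUP x. ereal (g (s *\<^sub>R x)))"
    using c by (subst Sup_ereal_mult_left') auto
  ultimately show ?thesis by simp
qed

lemma hfun_gauss_scale: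
  fixes \<phi> :: "real^'n^'n" and t :: real
  assumes t: "t > 0"
  shows "hfun (gauss (t *\<^sub>R \<phi>)) y = ereal (1/t\<^sup>2) * hfun (gauss \<phi>) y"
proof -
  define q where "q x = (norm (\<phi> *v x))\<^sup>2 / 2" for x
  define g where "g w = w \<bullet> y - q w" for w
  have qs: "q (s *\<^sub>R x) = s\<^sup>2 * q x" for s x
    by (simp add: q_def matrix_vector_mult_scaleR power_mult_distrib)
  have "hfun (gauss (t *\<^sub>R \<phi>)) y = (SUP x. ereal ((1/t\<^sup>2) * g (t\<^sup>2 *\<^sub>R x)))"
  proof -
    have "ereal (x \<bullet> y) - uof (gauss (t *\<^sub>R \<phi>)) x = ereal ((1/t\<^sup>2) * g (t\<^sup>2 *\<^sub>R x))" for x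
    proof -
      have "uof (gauss (t *\<^sub>R \<phi>)) x = ereal (q (t *\<^sub>R x))"
        by (simp add: uof_gauss q_def scaleR_matrix_vector_assoc[symmetric] matrix_vector_mult_scaleR)
      moreover have "x \<bullet> y - q (t *\<^sub>R x) = (1/t\<^sup>2) * g (t\<^sup>2 *\<^sub>R x)"
        using t by (simp add: g_def qs field_simps power2_eq_square)
      ultimately show ?thesis by simp
    qed
    then show ?thesis by (simp add: hfun_def legendre_def)
  qed
  also have "\<dots> = ereal (1/t\<^sup>2) * (SUP x. ereal (g x))"
    using t by (intro sup_scale) auto
  also have "(SUP x. ereal (g x)) = hfun (gauss \<phi>) y"
    by (simp add: hfun_def legendre_def uof_gauss g_def q_def)
  finally show ?thesis .
qed

lemma epow_scale:
  assumes c: "c > 0" and p: "p > 0"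
  shows "epow (ereal c * h) p = ennreal (c powr p) * epow h p"
proof (cases h)
  case (real r)
  show ?thesis
  proof (cases "r > 0")
    case True
    then show ?thesis using c p real
      by (simp add: epow_def powr_mult ennreal_mult)
  next
    case False
    then have "\<not> c * r > 0" using c by (simp add: zero_less_mult_iff)
    then show ?thesis using c p real False by (simp add: epow_def)
  qed
next
  case PInf
  then show ?thesis using c p by (simp add: epow_def ennreal_mult_top)
next
  case MInf
  then show ?thesis using c p by (simp add: epow_def)
qed

lemma deltaJ_scale:
  fixes \<phi> :: "real^'n::finite^'n"
  assumes t: "t > 0" and p: "p > 0"
  shows "deltaJ p f (gauss (t *\<^sub>R \<phi>)) = ennreal ((1/t\<^sup>2) powr p) * deltaJ p f (gauss \<phi>)"
proof -
  have K: "(1/t\<^sup>2) powr p > 0" using t by simp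
  have "epow (hfun (gauss (t *\<^sub>R \<phi>)) v) p = ennreal ((1/t\<^sup>2) powr p) * epow (hfun (gauss \<phi>) v) p" for v
    using t p by (simp add: hfun_gauss_scale epow_scale)
  then have "deltaJ p f (gauss (t *\<^sub>R \<phi>)) = ennreal (1/p) * (\<integral>\<^sup>+ x. ennreal ((1/t\<^sup>2) powr p) *
      (epow (hfun (gauss \<phi>) (gradu f x)) p * epow (hfun f (gradu f x)) (1 - p) * ennreal (f x)
        * indicator {x. uof f x \<noteq> \<infinity>} x) \<partial>lebesgue)"
    by (simp add: deltaJ_def mult.assoc)
  also have "\<dots> = ennreal ((1/t\<^sup>2) powr p) * deltaJ p f (gauss \<phi>)"
    by (subst nn_cmult_eq[OF K]) (simp add: deltaJ_def mult.assoc mult.left_commute)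
  finally show ?thesis .
qed

lemma gauss_measurable: "gauss (\<phi>::real^'n::finite^'n) \<in> borel_measurable borel"
proof -
  have [measurable]: "(\<lambda>x. \<phi> *v x) \<in> borel_measurable borel"
    by (intro borel_measurable_continuous_onI linear_continuous_on matrix_vector_mul_bounded_linear)
  show ?thesis unfolding gauss_def by measurable
qed


lemma exp_sq_integrable:
  fixes a :: real assumes a: "a > 0"
  shows "integrable lborel (\<lambda>x::real. exp (- a * x\<^sup>2))"
proof -
  have i0: "integrable lborel std_normal_density"
    using integrable_std_normal_moment[of 0] by simp
  have "integrable lborel (\<lambda>x. std_normal_density (0 + sqrt (2*a) * x))"
    using a by (intro lborel_integrable_real_affine[OF i0]) auto
  then have "integrable lborel (\<lambda>x. sqrt (2*pi) * std_normal_density (0 + sqrt (2*a) * x))"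
    by (rule integrable_mult_right)
  moreover have "(\<lambda>x. sqrt (2*pi) * std_normal_density (0 + sqrt (2*a) * x)) = (\<lambda>x. exp (- a * x\<^sup>2))"
    using a by (intro ext) (simp add: std_normal_density_def power_mult_distrib real_sqrt_mult)
  ultimately show ?thesis by metis
qed

lemma exp_norm_integrable:
  fixes a :: real assumes a: "a > 0"
  shows "integrable lborel (\<lambda>x::'a::euclidean_space. exp (- a * (norm x)\<^sup>2))"
proof (rule integrableI_nonneg)
  show "(\<lambda>x::'a. exp (- a * (norm x)\<^sup>2)) \<in> borel_measurable lborel" by measurable
  show "AE x in lborel. 0 \<le> exp (- a * (norm (x::'a))\<^sup>2)" by simp
  have eq: "ennreal (exp (- a * (norm x)\<^sup>2)) = (\<Prod>b\<in>Basis. ennreal (exp (- a * (x \<bullet> b)\<^sup>2)))" for x :: 'a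
  proof -
    have "(norm x)\<^sup>2 = (\<Sum>b\<in>Basis. (x \<bullet> b)\<^sup>2)"
      unfolding power2_norm_eq_inner euclidean_inner[of x x] by (simp add: power2_eq_square)
    then have "exp (- a * (norm x)\<^sup>2) = (\<Prod>b\<in>Basis. exp (- a * (x \<bullet> b)\<^sup>2))"
      by (simp add: sum_distrib_left exp_sum[symmetric] sum_negf)
    then show ?thesis by (simp add: prod_ennreal)
  qed
  have fin: "(\<integral>\<^sup>+ y. ennreal (exp (- a * y\<^sup>2)) \<partial>lborel) = ennreal (\<integral> y. exp (- a * y\<^sup>2) \<partial>lborel)"
    using exp_sq_integrable[OF a] by (intro nn_integral_eq_integral) auto
  have "(\<integral>\<^sup>+ x. ennreal (exp (- a * (norm (x::'a))\<^sup>2)) \<partial>lborel)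
      = (\<Prod>b\<in>(Basis::'a set). (\<integral>\<^sup>+ y. ennreal (exp (- a * y\<^sup>2)) \<partial>lborel))"
    unfolding eq by (subst nn_integral_lborel_prod) auto
  also have "\<dots> = ennreal (\<Prod>b\<in>(Basis::'a set). (\<integral> y. exp (- a * y\<^sup>2) \<partial>lborel))"
    unfolding fin by (simp add: ennreal_power integral_nonneg_AE)
  finally show "(\<integral>\<^sup>+ x. ennreal (exp (- a * (norm (x::'a))\<^sup>2)) \<partial>lborel) < \<infinity>" by simp
qed

lemma gauss_integrable:
  fixes \<phi> :: "real^'n::finite^'n"
  assumes inv: "invertible \<phi>"
  shows "integrable lborel (gauss \<phi>)"
proof -
  obtain \<psi> where \<psi>: "\<psi> ** \<phi> = mat 1" using inv unfolding invertible_def by blast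
  obtain K where K: "K > 0" "\<And>y. norm (\<psi> *v y) \<le> norm y * K"
    using bounded_linear.pos_bounded[OF matrix_vector_mul_bounded_linear[of \<psi>]] by blast
  have bnd: "norm x \<le> K * norm (\<phi> *v x)" for x
  proof -
    have "x = \<psi> *v (\<phi> *v x)" by (simp add: matrix_vector_mul_assoc \<psi>)
    then show ?thesis using K(2)[of "\<phi> *v x"] by (simp add: mult.commute)
  qed
  define a where "a = 1 / (2 * K\<^sup>2)"
  have a: "a > 0" using K by (simp add: a_def)
  show ?thesis
  proof (rule Bochner_Integration.integrable_bound[OF exp_norm_integrable[OF a]])
    show "gauss \<phi> \<in> borel_measurable lborel" using gauss_measurable by simp
    show "AE x in lborel. norm (gauss \<phi> x) \<le> norm (exp (- a * (norm x)\<^sup>2))"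
    proof (rule AE_I2)
      fix x :: "real^'n"
      have "(norm x)\<^sup>2 \<le> (K * norm (\<phi> *v x))\<^sup>2"
        using bnd[of x] by (intro power_mono) auto
      then have "a * (norm x)\<^sup>2 \<le> (norm (\<phi> *v x))\<^sup>2 / 2"
        using K by (simp add: a_def field_simps power_mult_distrib)
      then show "norm (gauss \<phi> x) \<le> norm (exp (- a * (norm x)\<^sup>2))"
        by (simp add: gauss_def)
    qed
  qed
qed

lemma Jint_gauss_pos:
  fixes \<phi> :: "real^'n::finite^'n"
  assumes inv: "invertible \<phi>"
  shows "Jint (gauss \<phi>) > 0"
proof -
  have i: "integrable lborel (gauss \<phi>)" by (rule gauss_integrable[OF inv])
  have nn: "AE x in lborel. 0 \<le> gauss \<phi> x" by (simp add: gauss_def)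
  have "integral\<^sup>L lborel (gauss \<phi>) \<ge> 0" using nn by (rule integral_nonneg_AE)
  moreover have "integral\<^sup>L lborel (gauss \<phi>) \<noteq> 0"
  proof
    assume "integral\<^sup>L lborel (gauss \<phi>) = 0"
    then have "AE x in lborel. gauss \<phi> x = 0" using integral_nonneg_eq_0_iff_AE[OF i nn] by simp
    then have "AE x in (lborel :: (real^'n) measure). False" by (simp add: gauss_def)
    then have "ae_filter (lborel :: (real^'n) measure) = bot" using trivial_limit_def by blast
    then show False by (simp add: ae_filter_eq_bot_iff emeasure_lborel_UNIV)
  qed
  ultimately show ?thesis by (simp add: Jint_def)
qed

lemma nn_scale:
  fixes f :: "real^'n::finite \<Rightarrow> real"
  assumes f[measurable]: "f \<in> borel_measurable borel" and t: "t \<noteq> 0"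
  shows "(\<integral>\<^sup>+ x. ennreal (f x) \<partial>lborel) = ennreal (\<bar>t\<bar> ^ CARD('n)) * (\<integral>\<^sup>+ x. ennreal (f (t *\<^sub>R x)) \<partial>lborel)"
proof -
  have "(\<integral>\<^sup>+ x. ennreal (f x) \<partial>lborel) = (\<integral>\<^sup>+ x. ennreal (f x) \<partial>density (distr lborel borel (\<lambda>x. 0 + t *\<^sub>R x)) (\<lambda>_. \<bar>t\<bar>^DIM(real^'n)))"
    using lborel_affine[OF t, of "0::real^'n"] by simp
  also have "\<dots> = (\<integral>\<^sup>+ x. ennreal (\<bar>t\<bar> ^ CARD('n)) * ennreal (f (t *\<^sub>R x)) \<partial>lborel)"
    by (simp add: nn_integral_density nn_integral_distr)
  also have "\<dots> = ennreal (\<bar>t\<bar> ^ CARD('n)) * (\<integral>\<^sup>+ x. ennreal (f (t *\<^sub>R x)) \<partial>lborel)"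
    by (rule nn_integral_cmult) measurable
  finally show ?thesis .
qed

lemma int_scale:
  fixes f :: "real^'n::finite \<Rightarrow> real"
  assumes f[measurable]: "f \<in> borel_measurable borel" and nn: "\<And>x. f x \<ge> 0" and t: "t \<noteq> 0"
  shows "(\<integral> x. f x \<partial>lborel) = \<bar>t\<bar> ^ CARD('n) * (\<integral> x. f (t *\<^sub>R x) \<partial>lborel)"
proof -
  have "(\<integral> x. f x \<partial>lborel) = enn2real (\<integral>\<^sup>+ x. ennreal (f x) \<partial>lborel)"
    using nn by (intro integral_eq_nn_integral) auto
  also have "\<dots> = \<bar>t\<bar> ^ CARD('n) * enn2real (\<integral>\<^sup>+ x. ennreal (f (t *\<^sub>R x)) \<partial>lborel)"
    by (simp add: nn_scale[OF f t] enn2real_mult)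
  also have "enn2real (\<integral>\<^sup>+ x. ennreal (f (t *\<^sub>R x)) \<partial>lborel) = (\<integral> x. f (t *\<^sub>R x) \<partial>lborel)"
    using nn by (intro integral_eq_nn_integral[symmetric]) auto
  finally show ?thesis .
qed



lemma A0_props:
  fixes f :: "real^'n::finite \<Rightarrow> real"
  assumes "f \<in> class_A0"
  shows "integrable lborel f" and "\<And>x. 0 \<le> f x" and "\<And>x. f x \<le> 1"
    and "\<And>x l. l \<ge> 1 \<Longrightarrow> f (l *\<^sub>R x) \<le> f x powr l"
proof -
  obtain u where f: "f = expneg u" and u: "class_L0 u" and i: "integrable lborel (expneg u)"
    using assms unfolding class_A0_def by blast
  show "integrable lborel f" using f i by simp
  have u0: "u x \<ge> 0" for x using u by (simp add: class_L0_def)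
  have uz: "u 0 = 0" using u by (simp add: class_L0_def)
  have cv: "ext_convex u" using u by (simp add: class_L0_def class_L_def)
  show "0 \<le> f x" for x by (simp add: f expneg_def)
  show "f x \<le> 1" for x
  proof (cases "u x")
    case (real r)
    then have "r \<ge> 0" using u0[of x] by simp
    then show ?thesis using real by (simp add: f expneg_def)
  qed (use u0[of x] in \<open>auto simp: f expneg_def\<close>)
  show "f (l *\<^sub>R x) \<le> f x powr l" if l: "l \<ge> 1" for x l
  proof (cases "l = 1")
    case True
    then show ?thesis by (cases "f x = 0") (auto simp: expneg_def f)
  next
    case False
    with l have l1: "l > 1" by simp
    have "u x \<le> ereal (1 - 1/l) * u 0 + ereal (1/l) * u (l *\<^sub>R x)"
    proof -
      have "u ((1 - 1/l) *\<^sub>R 0 + (1/l) *\<^sub>R (l *\<^sub>R x)) \<le> ereal (1 - 1/l) * u 0 + ereal (1/l) * u (l *\<^sub>R x)"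
        using cv l1 unfolding ext_convex_def by (intro cv[unfolded ext_convex_def, rule_format, of "1/l" 0 "l *\<^sub>R x"]) auto
      then show ?thesis using l1 by simp
    qed
    then have ux: "u x \<le> ereal (1/l) * u (l *\<^sub>R x)" using uz by simp
    show ?thesis
    proof (cases "u (l *\<^sub>R x)")
      case (real r)
      with ux have "u x \<le> ereal (r / l)" by simp
      moreover obtain s where s: "u x = ereal s" using u0[of x] \<open>u x \<le> ereal (r / l)\<close>
        by (cases "u x") auto
      ultimately have "s \<le> r / l" by simp
      then have "l * s \<le> r" using l1 by (simp add: field_simps)
      then show ?thesis using real s l1
        by (simp add: f expneg_def powr_def exp_ln ln_exp mult.commute)
    next
      case PInf
      then show ?thesis by (simp add: f expneg_def)
    next
      case MInf
      then show ?thesis using u0[of "l *\<^sub>R x"] by simp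
    qed
  qed
qed


lemma bern_aux:
  fixes e :: real assumes e: "e > 0"
  shows "1 - 1 / (1+e)^n \<le> real n * e"
proof -
  have "1 + real n * (- e/(1+e)) \<le> (1 + (- e/(1+e)))^n"
    using e by (intro Bernoulli_inequality) (simp add: field_simps)
  also have "1 + (- e/(1+e)) = 1/(1+e)" using e by (simp add: field_simps)
  finally have "1 - real n * e/(1+e) \<le> 1/(1+e)^n" by (simp add: power_one_over)
  moreover have "real n * e/(1+e) \<le> real n * e"
  proof -
    have "real n * e * (1+e) = real n * e + real n * e * e" by (simp add: algebra_simps)
    moreover have "0 \<le> real n * e * e" using e by simp
    ultimately show ?thesis using e by (simp add: divide_le_eq)
  qed
  ultimately show ?thesis by linarith
qed

lemma pointwise_aux:
  fixes y L e :: real assumes y: "0 < y" and L: "L = - ln y" and e: "e > 0" and L0: "L \<ge> 0"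
  shows "e * (y * L / (1 + e * L)) \<le> y - y powr (1 + e)"
proof -
  have "y powr (1+e) = y * exp (- e * L)" using y L
    by (simp add: powr_def distrib_right exp_add)
  moreover have "exp (- e * L) \<le> 1 / (1 + e * L)"
  proof -
    have "1 + e * L \<le> exp (e * L)" by (rule exp_ge_add_one_self)
    then have "1 / exp (e * L) \<le> 1 / (1 + e * L)"
      using e L0 by (intro divide_left_mono) (auto intro!: mult_pos_pos add_pos_nonneg)
    moreover have "exp (- e * L) = 1 / exp (e * L)" by (simp add: exp_minus field_simps)
    ultimately show ?thesis by simp
  qed
  ultimately have "y - y powr (1 + e) \<ge> y * (1 - 1 / (1 + e * L))"
  proof -
    assume A: "y powr (1+e) = y * exp (- e * L)" and B: "exp (- e * L) \<le> 1 / (1 + e * L)"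
    have C: "y * exp (- e * L) \<le> y * (1 / (1 + e * L))" using B y by (intro mult_left_mono) auto
    show ?thesis using A C by (simp add: right_diff_distrib)
  qed
  moreover have "y * (1 - 1 / (1 + e * L)) = e * (y * L / (1 + e * L))"
  proof -
    have pos: "1 + e * L \<noteq> 0" using e L0 by (smt (verit) mult_nonneg_nonneg)
    then show ?thesis by (simp add: field_simps)
  qed
  ultimately show ?thesis by simp
qed

lemma Jdiam_nonneg:
  fixes f :: "real^'n::finite \<Rightarrow> real"
  assumes A: "f \<in> class_A0"
  shows "Jdiam f \<ge> 0"
proof -
  note P = A0_props[OF A]
  have fi: "integrable lborel f" by (rule P(1))
  have fm[measurable]: "f \<in> borel_measurable borel"
    using borel_measurable_integrable[OF fi] by simp
  define L where "L x = - ln (f x)" for x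
  have L0: "L x \<ge> 0" for x
  proof (cases "f x = 0")
    case False then show ?thesis using P(2,3)[of x] by (simp add: L_def)
  qed (simp add: L_def)
  have Lm[measurable]: "L \<in> borel_measurable borel" unfolding L_def by measurable
  define g where "g e x = f x * L x / (1 + e * L x)" for e x
  have gm[measurable]: "g e \<in> borel_measurable borel" for e unfolding g_def by measurable
  define J where "J = (\<integral> x. f x \<partial>lborel)"
  have J0: "J \<ge> 0" unfolding J_def using P(2) by (simp add: integral_nonneg_AE)
  have gbound: "(\<integral> x. g e x \<partial>lborel) \<le> real CARD('n) * J \<and> integrable lborel (g e)" if e: "e > 0" for e
  proof -
    define l where "l = 1 + e"
    have l: "l \<ge> 1" "l \<noteq> 0" using e by (auto simp: l_def)
    have fl_le: "f (l *\<^sub>R x) \<le> f x" for x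
    proof -
      have "f (l *\<^sub>R x) \<le> f x powr l" using P(4) l by simp
      also have "\<dots> \<le> f x"
        using P(2,3)[of x] l by (cases "f x = 0") (auto intro: powr_le_one_le)
      finally show ?thesis .
    qed
    have fli: "integrable lborel (\<lambda>x. f (l *\<^sub>R x))"
      by (rule Bochner_Integration.integrable_bound[OF fi]) (auto simp: P(2) fl_le)
    have pw: "e * g e x \<le> f x - f (l *\<^sub>R x)" for x
    proof (cases "f x = 0")
      case True
      then have "f (l *\<^sub>R x) = 0" using fl_le[of x] P(2)[of "l *\<^sub>R x"] by simp
      then show ?thesis using True by (simp add: g_def)
    next
      case False
      then have y: "f x > 0" using P(2)[of x] by simp
      have "e * g e x \<le> f x - f x powr (1 + e)"
        unfolding g_def using pointwise_aux[OF y _ e L0[of x]] by (simp add: L_def)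
      also have "\<dots> \<le> f x - f (l *\<^sub>R x)" using P(4)[of l x] l by (simp add: l_def)
      finally show ?thesis .
    qed
    have g0: "g e x \<ge> 0" for x using e L0[of x] P(2)[of x] by (simp add: g_def)
    have gi: "integrable lborel (g e)"
    proof (rule Bochner_Integration.integrable_bound[of _ "\<lambda>x. (1/e) * f x"])
      show "integrable lborel (\<lambda>x. (1/e) * f x)" using fi by simp
      show "g e \<in> borel_measurable lborel" by simp
      show "AE x in lborel. norm (g e x) \<le> norm ((1/e) * f x)"
      proof (rule AE_I2)
        fix x
        have "e * g e x \<le> f x" using pw[of x] P(2)[of "l *\<^sub>R x"] by simp
        then show "norm (g e x) \<le> norm ((1/e) * f x)" using g0[of x] P(2)[of x] e
          by (simp add: field_simps)
      qed
    qed
    have "e * (\<integral> x. g e x \<partial>lborel) = (\<integral> x. e * g e x \<partial>lborel)" by simp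
    also have "\<dots> \<le> (\<integral> x. f x - f (l *\<^sub>R x) \<partial>lborel)"
      using gi fi fli pw by (intro integral_mono) auto
    also have "\<dots> = J - (\<integral> x. f (l *\<^sub>R x) \<partial>lborel)"
      using fi fli by (simp add: J_def)
    also have "(\<integral> x. f (l *\<^sub>R x) \<partial>lborel) = J / l ^ CARD('n)"
      unfolding J_def using int_scale[OF fm P(2) l(2)] l by simp
    finally have "e * (\<integral> x. g e x \<partial>lborel) \<le> J - J / l ^ CARD('n)" .
    also have "\<dots> = (1 - 1 / (1+e) ^ CARD('n)) * J" by (simp add: l_def field_simps)
    also have "\<dots> \<le> (real CARD('n) * e) * J"
      using J0 bern_aux[OF e] by (intro mult_right_mono) auto
    finally have "e * (\<integral> x. g e x \<partial>lborel) \<le> e * (real CARD('n) * J)" by (simp add: ac_simps)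
    then show ?thesis using e gi by simp
  qed
  define e where "e k = inverse (real (Suc k))" for k
  have epos: "e k > 0" for k by (simp add: e_def)
  define h where "h x = f x * L x" for x
  have hm[measurable]: "h \<in> borel_measurable borel" unfolding h_def by measurable
  have h0: "h x \<ge> 0" for x using P(2)[of x] L0[of x] by (simp add: h_def)
  have lim: "(\<lambda>k. ennreal (g (e k) x)) \<longlonglongrightarrow> ennreal (h x)" for x
  proof -
    have "(\<lambda>k. g (e k) x) \<longlonglongrightarrow> f x * L x / (1 + 0 * L x)"
      unfolding g_def e_def by (intro tendsto_intros LIMSEQ_inverse_real_of_nat) auto
    then show ?thesis by (intro tendsto_ennrealI) (simp add: h_def)
  qed
  have "(\<integral>\<^sup>+ x. ennreal (h x) \<partial>lborel) = (\<integral>\<^sup>+ x. liminf (\<lambda>k. ennreal (g (e k) x)) \<partial>lborel)"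
    by (intro nn_integral_cong lim_imp_Liminf[symmetric] lim) simp
  also have "\<dots> \<le> liminf (\<lambda>k. \<integral>\<^sup>+ x. ennreal (g (e k) x) \<partial>lborel)"
    by (intro nn_integral_liminf) measurable
  also have "\<dots> \<le> ennreal (real CARD('n) * J)"
  proof -
    have "(\<integral>\<^sup>+ x. ennreal (g (e k) x) \<partial>lborel) \<le> ennreal (real CARD('n) * J)" for k
    proof -
      have gb: "(\<integral> x. g (e k) x \<partial>lborel) \<le> real CARD('n) * J" "integrable lborel (g (e k))"
        using gbound[OF epos[of k]] by auto
      have "(\<integral>\<^sup>+ x. ennreal (g (e k) x) \<partial>lborel) = ennreal (\<integral> x. g (e k) x \<partial>lborel)"
        using epos[of k] L0 P(2) by (intro nn_integral_eq_integral[OF gb(2)] AE_I2) (simp add: g_def)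
      then show ?thesis using gb(1) by (simp add: ennreal_leI)
    qed
    then have "limsup (\<lambda>k. \<integral>\<^sup>+ x. ennreal (g (e k) x) \<partial>lborel) \<le> ennreal (real CARD('n) * J)"
      by (intro Limsup_bounded) auto
    then show ?thesis using Liminf_le_Limsup[of sequentially] order_trans by fastforce
  qed
  finally have hb: "(\<integral>\<^sup>+ x. ennreal (h x) \<partial>lborel) \<le> ennreal (real CARD('n) * J)" .
  have hi: "integrable lborel h"
    using hb h0 by (intro integrableI_nonneg) (auto simp: top_unique[symmetric] intro: le_less_trans)
  have "ennreal (\<integral> x. h x \<partial>lborel) = (\<integral>\<^sup>+ x. ennreal (h x) \<partial>lborel)"
    using hi h0 by (intro nn_integral_eq_integral[symmetric]) auto
  with hb have "ennreal (\<integral> x. h x \<partial>lborel) \<le> ennreal (real CARD('n) * J)" by simp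
  then have hle: "(\<integral> x. h x \<partial>lborel) \<le> real CARD('n) * J"
    using J0 by (subst (asm) ennreal_le_iff) auto
  have "Jdiam f = (\<integral> x. real CARD('n) * f x - h x \<partial>lborel)"
    by (simp add: Jdiam_def h_def L_def)
  also have "\<dots> = real CARD('n) * J - (\<integral> x. h x \<partial>lborel)"
    using fi hi by (simp add: J_def)
  finally show ?thesis using hle by simp
qed


lemma final_aux:
  fixes J s X :: real
  assumes "J = s * X" "0 < J" "s < 1" "0 < s" "X \<le> J"
  shows False
proof -
  have X: "X > 0" using assms(1,2,4) by (simp add: zero_less_mult_iff)
  have "s * X < 1 * X" using X assms(3) by (intro mult_strict_right_mono) auto
  then show False using assms(1,5) by simp
qed

theorem corollary3p4:
  fixes p :: real and f \<gamma> :: "real^'n \<Rightarrow> real"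
  assumes "p \<ge> 1" and "f \<in> class_A0" and "solves_Sp p f \<gamma>"
  shows "deltaJbar p f \<gamma> = 1"
proof (rule ccontr)
  assume ne: "deltaJbar p f \<gamma> \<noteq> 1"
  have p: "p > 0" using assms(1) by simp
  obtain \<phi> :: "real^'n^'n" where inv: "invertible \<phi>" and \<gamma>: "\<gamma> = gauss \<phi>"
    using assms(3) unfolding solves_Sp_def by blast
  have feas: "deltaJbar p f \<gamma> \<le> 1" using assms(3) unfolding solves_Sp_def by blast
  have max: "\<And>\<psi>::real^'n^'n. invertible \<psi> \<Longrightarrow> deltaJbar p f (gauss \<psi>) \<le> 1 \<Longrightarrow>
      Jint (gauss \<psi>) / c_const CARD('n) \<le> Jint \<gamma> / c_const CARD('n)"
    using assms(3) unfolding solves_Sp_def by blast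
  have fin: "deltaJ p f \<gamma> \<noteq> \<infinity>"
  proof
    assume "deltaJ p f \<gamma> = \<infinity>"
    then have "deltaJbar p f \<gamma> = \<infinity>" by (simp add: deltaJbar_def)
    then show False using feas by simp
  qed
  define D where "D = enn2real (deltaJ p f \<gamma>)"
  have D0: "D \<ge> 0" by (simp add: D_def)
  have Dj: "deltaJ p f \<gamma> = ennreal D" using fin unfolding D_def by (simp add: less_top[symmetric])
  define Jd where "Jd = Jdiam f"
  have Jd0: "Jd \<ge> 0" using Jdiam_nonneg[OF assms(2)] by (simp add: Jd_def)
  define a where "a = p * D / Jd"
  have a0: "a \<ge> 0" using p D0 Jd0 by (simp add: a_def)
  define r where "r = a powr (1/p)"
  have r0: "r \<ge> 0" by (simp add: r_def)
  have dbar: "deltaJbar p f \<gamma> = ereal r"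
    using fin by (simp add: deltaJbar_def r_def a_def D_def Jd_def)
  have r1: "r < 1" using feas ne dbar by simp
  define t where "t = (if r > 0 then sqrt r else 1/2)"
  have t0: "t > 0" and t1: "t < 1" and rt: "r \<le> t\<^sup>2"
    using r0 r1 by (auto simp: t_def real_sqrt_lt_1_iff)
  define \<psi> where "\<psi> = t *\<^sub>R \<phi>"
  have inv\<psi>: "invertible \<psi>" unfolding \<psi>_def using t0 inv by (intro scalar_invertible) auto
  define K where "K = (1/t\<^sup>2) powr p"
  have K0: "K > 0" using t0 by (simp add: K_def)
  have dJ: "deltaJ p f (gauss \<psi>) = ennreal (K * D)"
    unfolding \<psi>_def using deltaJ_scale[OF t0 p, of f \<phi>] Dj K0 D0
    by (simp add: \<gamma> K_def ennreal_mult)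
  have "(p * (K * D) / Jd) powr (1/p) = (K * a) powr (1/p)"
    by (simp add: a_def ac_simps)
  also have "\<dots> = K powr (1/p) * r"
    using K0 a0 by (simp add: powr_mult r_def)
  also have "K powr (1/p) = 1/t\<^sup>2"
    using p t0 by (simp add: K_def powr_powr)
  finally have "deltaJbar p f (gauss \<psi>) = ereal (r / t\<^sup>2)"
    using dJ K0 D0 by (simp add: deltaJbar_def Jd_def)
  moreover have "r / t\<^sup>2 \<le> 1" using rt t0 by simp
  ultimately have "deltaJbar p f (gauss \<psi>) \<le> 1" by simp
  from max[OF inv\<psi> this] have le: "Jint (gauss \<psi>) \<le> Jint \<gamma>"
    by (simp add: c_const_def divide_le_cancel)
  have "Jint \<gamma> = \<bar>t\<bar> ^ CARD('n) * (\<integral> x. gauss \<phi> (t *\<^sub>R x) \<partial>lborel)"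
    unfolding Jint_def \<gamma> by (rule int_scale[OF gauss_measurable]) (use t0 in \<open>auto simp: gauss_def\<close>)
  then have "Jint \<gamma> = t ^ CARD('n) * Jint (gauss \<psi>)"
    using t0 by (simp add: Jint_def \<psi>_def gauss_scale)
  moreover have "Jint \<gamma> > 0" using Jint_gauss_pos[OF inv] \<gamma> by simp
  moreover have "t ^ CARD('n) < 1" using t0 t1 by (simp add: power_less_one_iff)
  moreover have "t ^ CARD('n) > 0" using t0 by simp
  ultimately show False using le final_aux by blast
qed

end
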